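(* Every almost bipartite cubic graph is $3$-edge-colourable.
   Context: A cubic graph $G$ (multiple edges and loops permitted) is almost bipartite if it is bridgeless, not bipartite, and contains two edges $e$ and $f$ such that $G-\{e,f\}$ is bipartite. A $3$-edge-colouring is a proper edge colouring with three colours. *)

theory Defs
  imports Main
begin

text \<open>Finite multigraphs (parallel edges and loops permitted). The order of the endpoints carries no meaning.\<close>

definition multigraph :: "'v set \<Rightarrow> 'e set \<Rightarrow> ('e \<Rightarrow> 'v \<times> 'v) \<Rightarrow> bool" where
  "multigraph V E ends \<longleftrightarrow> finite V \<and> finite E \<and>
     (\<forall>e\<in>E. fst (ends e) \<in> V \<and> snd (ends e) \<in> V)"

text \<open>Degree: number of edge-ends at v (a loop contributes 2).\<close>
definition degree :: "'e set \<Rightarrow> ('e \<Rightarrow> 'v \<times> 'v) \<Rightarrow> 'v \<Rightarrow> nat" where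
  "degree E ends v = card {e\<in>E. fst (ends e) = v} + card {e\<in>E. snd (ends e) = v}"

definition cubic :: "'v set \<Rightarrow> 'e set \<Rightarrow> ('e \<Rightarrow> 'v \<times> 'v) \<Rightarrow> bool" where
  "cubic V E ends \<longleftrightarrow> multigraph V E ends \<and> (\<forall>v\<in>V. degree E ends v = 3)"

definition adj :: "'e set \<Rightarrow> ('e \<Rightarrow> 'v \<times> 'v) \<Rightarrow> 'v \<Rightarrow> 'v \<Rightarrow> bool" where
  "adj F ends x y \<longleftrightarrow> (\<exists>e\<in>F. ends e = (x, y) \<or> ends e = (y, x))"

definition connected_in :: "'e set \<Rightarrow> ('e \<Rightarrow> 'v \<times> 'v) \<Rightarrow> 'v \<Rightarrow> 'v \<Rightarrow> bool" where
  "connected_in F ends x y \<longleftrightarrow> (adj F ends)\<^sup>*\<^sup>* x y"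

definition is_bridge :: "'e set \<Rightarrow> ('e \<Rightarrow> 'v \<times> 'v) \<Rightarrow> 'e \<Rightarrow> bool" where
  "is_bridge E ends e \<longleftrightarrow> e \<in> E \<and>
     \<not> connected_in (E - {e}) ends (fst (ends e)) (snd (ends e))"

definition bridgeless :: "'e set \<Rightarrow> ('e \<Rightarrow> 'v \<times> 'v) \<Rightarrow> bool" where
  "bridgeless E ends \<longleftrightarrow> (\<forall>e\<in>E. \<not> is_bridge E ends e)"

definition bipartite :: "'e set \<Rightarrow> ('e \<Rightarrow> 'v \<times> 'v) \<Rightarrow> bool" where
  "bipartite F ends \<longleftrightarrow> (\<exists>side :: 'v \<Rightarrow> bool. \<forall>e\<in>F. side (fst (ends e)) \<noteq> side (snd (ends e)))"

definition almost_bipartite :: "'v set \<Rightarrow> 'e set \<Rightarrow> ('e \<Rightarrow> 'v \<times> 'v) \<Rightarrow> bool" where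
  "almost_bipartite V E ends \<longleftrightarrow> cubic V E ends \<and> bridgeless E ends \<and> \<not> bipartite E ends \<and>
     (\<exists>e\<in>E. \<exists>f\<in>E. e \<noteq> f \<and> bipartite (E - {e, f}) ends)"

text \<open>Proper 3-edge-colouring: colours in {0,1,2}, and at every vertex each colour
occurs at most once among the edge-ends at that vertex (a loop gives two ends).\<close>
definition three_edge_colouring :: "'v set \<Rightarrow> 'e set \<Rightarrow> ('e \<Rightarrow> 'v \<times> 'v) \<Rightarrow> ('e \<Rightarrow> nat) \<Rightarrow> bool" where
  "three_edge_colouring V E ends col \<longleftrightarrow> (\<forall>e\<in>E. col e < 3) \<and>
     (\<forall>v\<in>V. \<forall>k. card {e\<in>E. fst (ends e) = v \<and> col e = k}
                 + card {e\<in>E. snd (ends e) = v \<and> col e = k} \<le> 1)"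

definition three_edge_colourable :: "'v set \<Rightarrow> 'e set \<Rightarrow> ('e \<Rightarrow> 'v \<times> 'v) \<Rightarrow> bool" where
  "three_edge_colourable V E ends \<longleftrightarrow> (\<exists>col. three_edge_colouring V E ends col)"

end

theory Submission
  imports Defs
begin


lemma hall:
  fixes I :: "'a set" and X :: "'a \<Rightarrow> 'b set"
  assumes "finite I" "\<forall>i\<in>I. finite (X i)" "\<forall>J\<subseteq>I. card J \<le> card (\<Union>(X ` J))"
  shows "\<exists>r. inj_on r I \<and> (\<forall>i\<in>I. r i \<in> X i)"
  using assms
proof (induction "card I" arbitrary: I X rule: less_induct)
  case less
  note fin = less.prems(1) and finX = less.prems(2) and H = less.prems(3)
  show ?case
  proof (cases "I = {}")
    case True then show ?thesis by auto
  next
    case ne: False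
    show ?thesis
    proof (cases "\<exists>J. J \<subseteq> I \<and> J \<noteq> {} \<and> J \<noteq> I \<and> card (\<Union>(X ` J)) = card J")
      case False
      then have strict: "\<And>J. J \<subseteq> I \<Longrightarrow> J \<noteq> {} \<Longrightarrow> J \<noteq> I \<Longrightarrow> card J < card (\<Union>(X ` J))"
        using H by (metis le_neq_implies_less)
      obtain i0 where i0: "i0 \<in> I" using ne by auto
      have "card {i0} \<le> card (X i0)" using H[rule_format, of "{i0}"] i0 by auto
      then have "X i0 \<noteq> {}" using finX i0 by auto
      then obtain x where x: "x \<in> X i0" by auto
      define I' where "I' = I - {i0}"
      define X' where "X' = (\<lambda>i. X i - {x})"
      have cI': "card I' < card I" unfolding I'_def using fin i0 by (meson card_Diff1_less)
      have H': "\<forall>J\<subseteq>I'. card J \<le> card (\<Union>(X' ` J))"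
      proof (intro allI impI)
        fix J assume J: "J \<subseteq> I'"
        show "card J \<le> card (\<Union>(X' ` J))"
        proof (cases "J = {}")
          case True then show ?thesis by simp
        next
          case False
          have JI: "J \<subseteq> I" "J \<noteq> I" using J i0 unfolding I'_def by auto
          have lt: "card J < card (\<Union>(X ` J))" using strict JI False by blast
          have finU: "finite (\<Union>(X ` J))" using finX JI fin by (meson finite_UN_I finite_subset subsetD)
          have "\<Union>(X' ` J) = \<Union>(X ` J) - {x}" unfolding X'_def by auto
          then have "card (\<Union>(X' ` J)) \<ge> card (\<Union>(X ` J)) - 1"
            using finU by (simp add: card_Diff_singleton_if)
          then show ?thesis using lt by linarith
        qed
      qed
      have "finite I'" "\<forall>i\<in>I'. finite (X' i)" using fin finX unfolding I'_def X'_def by auto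
      from less.hyps[OF cI' this H'] obtain r' where r': "inj_on r' I'" "\<forall>i\<in>I'. r' i \<in> X' i" by blast
      define r where "r = r'(i0 := x)"
      have "inj_on r I"
      proof (rule inj_onI)
        fix i j assume ij: "i \<in> I" "j \<in> I" "r i = r j"
        show "i = j"
        proof (cases "i = i0"; cases "j = i0")
          assume "i = i0" "j \<noteq> i0" then show ?thesis using ij r'(2) unfolding r_def I'_def X'_def by auto
        next
          assume "i \<noteq> i0" "j = i0" then show ?thesis using ij r'(2) unfolding r_def I'_def X'_def by auto
        next
          assume "i \<noteq> i0" "j \<noteq> i0" then show ?thesis using ij r'(1) unfolding r_def I'_def
            by (auto dest: inj_onD)
        qed simp
      qed
      moreover have "\<forall>i\<in>I. r i \<in> X i" using r'(2) x unfolding r_def I'_def X'_def by auto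
      ultimately show ?thesis by blast
    next
      case True
      then obtain J where J: "J \<subseteq> I" "J \<noteq> {}" "J \<noteq> I" "card (\<Union>(X ` J)) = card J" by blast
      have finJ: "finite J" using J fin finite_subset by blast
      have cJ: "card J < card I" using J fin by (meson psubsetI psubset_card_mono)
      have HJ: "\<forall>K\<subseteq>J. card K \<le> card (\<Union>(X ` K))" using H J by auto
      from less.hyps[OF cJ finJ _ HJ] finX J obtain r1 where r1: "inj_on r1 J" "\<forall>i\<in>J. r1 i \<in> X i" by blast
      define I2 where "I2 = I - J"
      define X2 where "X2 = (\<lambda>i. X i - \<Union>(X ` J))"
      have cI2: "card I2 < card I" unfolding I2_def using J fin
        by (metis Diff_empty Diff_subset card_seteq double_diff dual_order.refl finite_Diff
              le_neq_implies_less card_mono Diff_eq_empty_iff)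
      have finUJ: "finite (\<Union>(X ` J))" using finX J finJ by auto
      have H2: "\<forall>K\<subseteq>I2. card K \<le> card (\<Union>(X2 ` K))"
      proof (intro allI impI)
        fix K assume K: "K \<subseteq> I2"
        have finK: "finite K" using K fin unfolding I2_def by (meson finite_Diff finite_subset)
        have disj: "K \<inter> J = {}" using K unfolding I2_def by auto
        have "K \<union> J \<subseteq> I" using K J unfolding I2_def by auto
        then have "card (K \<union> J) \<le> card (\<Union>(X ` (K \<union> J)))" using H by blast
        moreover have "\<Union>(X ` (K \<union> J)) = \<Union>(X2 ` K) \<union> \<Union>(X ` J)" unfolding X2_def by auto
        moreover have "finite (\<Union>(X2 ` K))" using finX K finK unfolding X2_def I2_def by auto
        moreover have "\<Union>(X2 ` K) \<inter> \<Union>(X ` J) = {}" unfolding X2_def by auto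
        ultimately have "card (K \<union> J) \<le> card (\<Union>(X2 ` K)) + card (\<Union>(X ` J))"
          using finUJ by (simp add: card_Un_disjoint)
        moreover have "card (K \<union> J) = card K + card J" using finK finJ disj by (simp add: card_Un_disjoint)
        ultimately show "card K \<le> card (\<Union>(X2 ` K))" using J(4) by linarith
      qed
      have "finite I2" "\<forall>i\<in>I2. finite (X2 i)" using fin finX unfolding I2_def X2_def by auto
      from less.hyps[OF cI2 this H2] obtain r2 where r2: "inj_on r2 I2" "\<forall>i\<in>I2. r2 i \<in> X2 i" by blast
      define r where "r = (\<lambda>i. if i \<in> J then r1 i else r2 i)"
      have "inj_on r I"
      proof (rule inj_onI)
        fix i j assume ij: "i \<in> I" "j \<in> I" "r i = r j"
        show "i = j"
        proof (cases "i \<in> J"; cases "j \<in> J")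
          assume "i \<in> J" "j \<in> J" then show ?thesis using ij r1(1) unfolding r_def by (auto dest: inj_onD)
        next
          assume "i \<notin> J" "j \<notin> J" then show ?thesis using ij r2(1) unfolding r_def I2_def by (auto dest: inj_onD)
        next
          assume a: "i \<in> J" "j \<notin> J" then show ?thesis using ij r1(2)[rule_format, of i] r2(2)[rule_format, of j] unfolding r_def I2_def X2_def by auto
        next
          assume a: "i \<notin> J" "j \<in> J" then show ?thesis using ij r1(2)[rule_format, of j] r2(2)[rule_format, of i] unfolding r_def I2_def X2_def by auto
        qed
      qed
      moreover have "\<forall>i\<in>I. r i \<in> X i" using r1(2) r2(2) unfolding r_def I2_def X2_def by auto
      ultimately show ?thesis by blast
    qed
  qed
qed



definition mult :: "('e \<Rightarrow> 'v \<times> 'v) \<Rightarrow> 'e \<Rightarrow> 'v \<Rightarrow> nat" where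
  "mult ends g v = (if fst (ends g) = v then 1 else 0) + (if snd (ends g) = v then 1 else 0)"

definition dg :: "'e set \<Rightarrow> ('e \<Rightarrow> 'v \<times> 'v) \<Rightarrow> 'v \<Rightarrow> nat" where
  "dg F ends v = (\<Sum>g\<in>F. mult ends g v)"

definition cnt :: "('e \<Rightarrow> 'v \<times> 'v) \<Rightarrow> 'v set \<Rightarrow> 'e \<Rightarrow> nat" where
  "cnt ends Y g = (if fst (ends g) \<in> Y then 1 else 0) + (if snd (ends g) \<in> Y then 1 else 0)"

lemma card_filter_sum: "finite A \<Longrightarrow> card {x\<in>A. P x} = (\<Sum>x\<in>A. if P x then 1 else 0)"
proof (induction A rule: finite_induct)
  case empty then show ?case by simp
next
  case (insert a A)
  have "{x \<in> insert a A. P x} = (if P a then insert a {x\<in>A. P x} else {x\<in>A. P x})" by auto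
  then show ?case using insert by (simp add: card_insert_if)
qed

lemma degree_dg: "finite E \<Longrightarrow> degree E ends v = dg E ends v"
proof -
  assume fin: "finite E"
  have "dg E ends v = (\<Sum>g\<in>E. if fst (ends g) = v then 1 else 0) + (\<Sum>g\<in>E. if snd (ends g) = v then 1 else 0)"
    unfolding dg_def mult_def by (rule sum.distrib)
  then show ?thesis unfolding degree_def using card_filter_sum[OF fin, of "\<lambda>g. fst (ends g) = v"]
    card_filter_sum[OF fin, of "\<lambda>g. snd (ends g) = v"] by linarith
qed

lemma card_colour_dg: "finite E \<Longrightarrow>
   card {e\<in>E. fst (ends e) = v \<and> col e = k} + card {e\<in>E. snd (ends e) = v \<and> col e = k}
   = dg {e\<in>E. col e = k} ends v"
proof -
  assume fin: "finite E"
  have "card {e\<in>E. fst (ends e) = v \<and> col e = k} = card {e\<in>{e\<in>E. col e = k}. fst (ends e) = v}"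
    by (rule arg_cong[where f=card]) auto
  moreover have "card {e\<in>E. snd (ends e) = v \<and> col e = k} = card {e\<in>{e\<in>E. col e = k}. snd (ends e) = v}"
    by (rule arg_cong[where f=card]) auto
  ultimately show ?thesis using degree_dg[of "{e\<in>E. col e = k}" ends v] fin unfolding degree_def by simp
qed

lemma sum_dg: "finite F \<Longrightarrow> finite Y \<Longrightarrow> (\<Sum>v\<in>Y. dg F ends v) = (\<Sum>g\<in>F. cnt ends Y g)"
  unfolding dg_def
  apply (subst sum.swap)
  apply (simp add: mult_def cnt_def sum.distrib)
  done

lemma cubic_sum: "cubic V E ends \<Longrightarrow> Y \<subseteq> V \<Longrightarrow> (\<Sum>g\<in>E. cnt ends Y g) = 3 * card Y"
proof -
  assume c: "cubic V E ends" and Y: "Y \<subseteq> V"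
  have fin: "finite V" "finite E" using c unfolding cubic_def multigraph_def by auto
  have "finite Y" using fin Y finite_subset by blast
  then have "(\<Sum>g\<in>E. cnt ends Y g) = (\<Sum>v\<in>Y. dg E ends v)" using sum_dg fin by metis
  also have "\<dots> = (\<Sum>v\<in>Y. 3)"
  proof (rule sum.cong[OF refl])
    fix v assume "v \<in> Y"
    then have "v \<in> V" using Y by blast
    then have "degree E ends v = 3" using c unfolding cubic_def by auto
    then show "dg E ends v = 3" using degree_dg[OF fin(2), of ends v] by linarith
  qed
  finally show ?thesis by simp
qed

lemma cut_bridge:
  assumes g: "g \<in> E" and W: "\<forall>h\<in>E-{g}. fst (ends h) \<in> W \<longleftrightarrow> snd (ends h) \<in> W"
    and gW: "(fst (ends g) \<in> W) \<noteq> (snd (ends g) \<in> W)"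
  shows "is_bridge E ends g"
proof -
  have "connected_in (E-{g}) ends x y \<Longrightarrow> (x \<in> W \<longleftrightarrow> y \<in> W)" for x y
    unfolding connected_in_def
  proof (induction rule: rtranclp_induct)
    case base then show ?case by simp
  next
    case (step y z)
    then obtain h where "h \<in> E-{g}" "ends h = (y, z) \<or> ends h = (z, y)" unfolding adj_def by blast
    then show ?case using W step.IH by (metis fst_conv snd_conv)
  qed
  then show ?thesis using g gW unfolding is_bridge_def by blast
qed

lemma dg_union: "finite M \<Longrightarrow> finite N \<Longrightarrow> M \<inter> N = {} \<Longrightarrow> dg (M \<union> N) ends v = dg M ends v + dg N ends v"
  unfolding dg_def by (simp add: sum.union_disjoint)

lemma dg_diff: "finite F \<Longrightarrow> M \<subseteq> F \<Longrightarrow> dg (F - M) ends v = dg F ends v - dg M ends v"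
proof -
  assume fF: "finite F" and MF: "M \<subseteq> F"
  then have fM: "finite M" using finite_subset by blast
  have eq: "(F - M) \<union> M = F" using MF by blast
  have "dg ((F - M) \<union> M) ends v = dg (F - M) ends v + dg M ends v"
    by (rule dg_union) (use fF fM in auto)
  then show ?thesis using eq by simp
qed

lemma no_loop:
  assumes c: "cubic V E ends" and b: "bridgeless E ends" and l: "l \<in> E"
  shows "fst (ends l) \<noteq> snd (ends l)"
proof
  assume eq: "fst (ends l) = snd (ends l)"
  define v where "v = fst (ends l)"
  have fin: "finite E" using c unfolding cubic_def multigraph_def by auto
  have vV: "v \<in> V" using c l unfolding cubic_def multigraph_def v_def by auto
  have "degree E ends v = 3" using c vV unfolding cubic_def by auto
  then have "dg E ends v = 3" using degree_dg[OF fin, of ends v] by linarith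
  moreover have "dg E ends v = mult ends l v + dg (E - {l}) ends v"
    unfolding dg_def using fin l by (simp add: sum.remove)
  moreover have "mult ends l v = 2" unfolding mult_def v_def using eq by simp
  ultimately have d1: "dg (E - {l}) ends v = 1" by simp
  have "\<exists>g\<in>E - {l}. mult ends g v \<noteq> 0"
  proof (rule ccontr)
    assume "\<not> ?thesis"
    then have "dg (E - {l}) ends v = 0" unfolding dg_def by simp
    then show False using d1 by simp
  qed
  then obtain g where g: "g \<in> E - {l}" "mult ends g v \<noteq> 0" by blast
  have "dg (E - {l}) ends v = mult ends g v + dg (E - {l} - {g}) ends v"
    unfolding dg_def using fin g by (simp add: sum.remove)
  then have mg: "mult ends g v = 1" and rest: "dg (E - {l} - {g}) ends v = 0" using d1 g(2) by auto
  have rest': "\<forall>h\<in>E - {l} - {g}. mult ends h v = 0" using rest fin unfolding dg_def by simp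
  have "is_bridge E ends g"
  proof (rule cut_bridge[where W="{v}"])
    show "g \<in> E" using g by auto
    show "\<forall>h\<in>E - {g}. (fst (ends h) \<in> {v}) = (snd (ends h) \<in> {v})"
    proof
      fix h assume h: "h \<in> E - {g}"
      show "(fst (ends h) \<in> {v}) = (snd (ends h) \<in> {v})"
      proof (cases "h = l")
        case True then show ?thesis using eq by simp
      next
        case False then have "mult ends h v = 0" using rest' h by auto
        then show ?thesis unfolding mult_def by (auto split: if_splits)
      qed
    qed
    show "(fst (ends g) \<in> {v}) \<noteq> (snd (ends g) \<in> {v})" using mg unfolding mult_def by (auto split: if_splits)
  qed
  then show False using b g unfolding bridgeless_def by auto
qed



definition joins :: "('e \<Rightarrow> 'v \<times> 'v) \<Rightarrow> 'e \<Rightarrow> 'v \<Rightarrow> 'v \<Rightarrow> bool" where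
  "joins ends g a b \<longleftrightarrow> ends g = (a, b) \<or> ends g = (b, a)"

lemma matching:
  assumes fin: "finite P" and inj: "inj_on r P" and ex: "\<forall>a\<in>P. \<exists>g\<in>F. joins ends g a (r a)"
    and disj: "P \<inter> r ` P = {}"
  shows "\<exists>M \<subseteq> F. finite M \<and> (\<forall>v. dg M ends v = (if v \<in> P then 1 else 0) + (if v \<in> r ` P then 1 else 0))"
proof -
  define m where "m = (\<lambda>a. SOME g. g \<in> F \<and> joins ends g a (r a))"
  have m: "m a \<in> F \<and> joins ends (m a) a (r a)" if "a \<in> P" for a
    unfolding m_def using ex that by (metis (no_types, lifting) someI_ex)
  have injm: "inj_on m P"
  proof (rule inj_onI)
    fix a b assume ab: "a \<in> P" "b \<in> P" "m a = m b"
    have "joins ends (m a) a (r a)" using m[OF ab(1)] by blast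
    moreover have "joins ends (m a) b (r b)" using m[OF ab(2)] ab(3) by simp
    ultimately have "(a = b) \<or> (a = r b) \<or> (r a = b)" unfolding joins_def by auto
    then show "a = b" using ab disj by auto
  qed
  have mult_m: "mult ends (m a) v = (if a = v then 1 else 0) + (if r a = v then 1 else 0)" if "a \<in> P" for a v
    using m[OF that] unfolding joins_def mult_def by auto
  have "dg (m ` P) ends v = (if v \<in> P then 1 else 0) + (if v \<in> r ` P then 1 else 0)" for v
  proof -
    have "dg (m ` P) ends v = (\<Sum>a\<in>P. mult ends (m a) v)"
      unfolding dg_def using injm by (simp add: sum.reindex)
    also have "\<dots> = (\<Sum>a\<in>P. (if a = v then 1 else 0) + (if r a = v then 1 else 0))"
      using mult_m by simp
    also have "\<dots> = (\<Sum>a\<in>P. (if a = v then 1 else 0)) + (\<Sum>a\<in>P. (if r a = v then 1 else 0))"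
      by (simp add: sum.distrib)
    also have "(\<Sum>a\<in>P. (if r a = v then 1 else 0)) = (\<Sum>b\<in>r ` P. (if b = v then 1 else (0::nat)))"
      using inj by (simp add: sum.reindex)
    finally show ?thesis using fin by simp
  qed
  moreover have "m ` P \<subseteq> F" using m by auto
  ultimately show ?thesis using fin by blast
qed



lemma sum2: "finite E \<Longrightarrow> e \<in> E \<Longrightarrow> f \<in> E \<Longrightarrow> e \<noteq> f \<Longrightarrow>
  (\<Sum>g\<in>E. h g) = h e + h f + (\<Sum>g\<in>E - {e, f}. (h g :: nat))"
proof -
  assume a: "finite E" "e \<in> E" "f \<in> E" "e \<noteq> f"
  have "(\<Sum>g\<in>E. h g) = h e + (\<Sum>g\<in>E - {e}. h g)" using a by (simp add: sum.remove)
  also have "(\<Sum>g\<in>E - {e}. h g) = h f + (\<Sum>g\<in>E - {e} - {f}. h g)" using a by (simp add: sum.remove)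
  also have "E - {e} - {f} = E - {e, f}" by auto
  finally show ?thesis by simp
qed

lemma core:
  fixes V :: "'v set" and E :: "'e set" and ends :: "'e \<Rightarrow> 'v \<times> 'v" and s :: "'v \<Rightarrow> bool"
  assumes c: "cubic V E ends" and br: "bridgeless E ends" and eE: "e \<in> E" and fE: "f \<in> E" and ef: "e \<noteq> f"
    and bip: "\<forall>g\<in>E-{e,f}. s (fst (ends g)) \<noteq> s (snd (ends g))"
    and ea: "s (fst (ends e))" "s (snd (ends e))" and fb: "\<not> s (fst (ends f))" "\<not> s (snd (ends f))"
  shows "three_edge_colourable V E ends"
proof -
  have finV: "finite V" and finE: "finite E" and endsV: "\<forall>g\<in>E. fst (ends g) \<in> V \<and> snd (ends g) \<in> V"
    using c unfolding cubic_def multigraph_def by auto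
  have degV: "\<forall>v\<in>V. dg E ends v = 3"
  proof
    fix v assume "v \<in> V"
    then have "degree E ends v = 3" using c unfolding cubic_def by auto
    then show "dg E ends v = 3" using degree_dg[OF finE, of ends v] by linarith
  qed
  define A where "A = {v\<in>V. s v}"
  define B where "B = {v\<in>V. \<not> s v}"
  have AB: "A \<inter> B = {}" "A \<union> B = V" "A \<subseteq> V" "B \<subseteq> V" unfolding A_def B_def by auto
  have finA: "finite A" and finB: "finite B" using finV AB by (auto intro: finite_subset)
  define a1 where "a1 = fst (ends e)"
  define a2 where "a2 = snd (ends e)"
  define b1 where "b1 = fst (ends f)"
  define b2 where "b2 = snd (ends f)"
  have aA: "a1 \<in> A" "a2 \<in> A" using ea endsV eE unfolding A_def a1_def a2_def by auto
  have bB: "b1 \<in> B" "b2 \<in> B" using fb endsV fE unfolding B_def b1_def b2_def by auto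
  have a12: "a1 \<noteq> a2" using no_loop[OF c br eE] unfolding a1_def a2_def .
  have b12: "b1 \<noteq> b2" using no_loop[OF c br fE] unfolding b1_def b2_def .
  define ae where "ae = (\<lambda>g. if s (fst (ends g)) then fst (ends g) else snd (ends g))"
  define be where "be = (\<lambda>g. if s (fst (ends g)) then snd (ends g) else fst (ends g))"
  have aeA: "ae g \<in> A" and beB: "be g \<in> B" and jg: "joins ends g (ae g) (be g)" if "g \<in> E - {e,f}" for g
    using that bip endsV unfolding ae_def be_def A_def B_def joins_def by (auto simp: prod_eq_iff)
  have cnt_ab: "cnt ends W g = (if ae g \<in> W then 1 else 0) + (if be g \<in> W then 1 else 0)" if "g \<in> E - {e,f}" for g W
    unfolding cnt_def ae_def be_def by auto
  have mult_e: "mult ends e v = (if v = a1 then 1 else 0) + (if v = a2 then 1 else 0)" for v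
    unfolding mult_def a1_def a2_def by auto
  have mult_f: "mult ends f v = (if v = b1 then 1 else 0) + (if v = b2 then 1 else 0)" for v
    unfolding mult_def b1_def b2_def by auto
  have cnt_e: "cnt ends W e = (if a1 \<in> W then 1 else 0) + (if a2 \<in> W then 1 else 0)" for W
    unfolding cnt_def a1_def a2_def by auto
  have cnt_f: "cnt ends W f = (if b1 \<in> W then 1 else 0) + (if b2 \<in> W then 1 else 0)" for W
    unfolding cnt_def b1_def b2_def by auto
  have cardAB: "card A = card B"
  proof -
    have "3 * card A = (\<Sum>g\<in>E. cnt ends A g)" using cubic_sum[OF c AB(3)] by simp
    also have "\<dots> = cnt ends A e + cnt ends A f + (\<Sum>g\<in>E-{e,f}. cnt ends A g)" by (rule sum2[OF finE eE fE ef])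
    also have "(\<Sum>g\<in>E-{e,f}. cnt ends A g) = (\<Sum>g\<in>E-{e,f}. cnt ends B g)"
    proof (rule sum.cong)
      fix g assume g: "g \<in> E - {e,f}"
      show "cnt ends A g = cnt ends B g" using cnt_ab[OF g] aeA[OF g] beB[OF g] AB(1) by auto
    qed simp
    also have "cnt ends A e + cnt ends A f = cnt ends B e + cnt ends B f"
      using cnt_e cnt_f aA bB AB(1) by auto
    also have "cnt ends B e + cnt ends B f + (\<Sum>g\<in>E-{e,f}. cnt ends B g) = (\<Sum>g\<in>E. cnt ends B g)"
      by (rule sym[OF sum2[OF finE eE fE ef]])
    also have "\<dots> = 3 * card B" using cubic_sum[OF c AB(4)] by simp
    finally show ?thesis by simp
  qed
  define A' where "A' = A - {a1, a2}"
  define B' where "B' = B - {b1, b2}"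
  define X where "X = (\<lambda>a. {b\<in>B'. \<exists>g\<in>E-{e,f}. joins ends g a b})"
  have finA': "finite A'" and finB': "finite B'" using finA finB unfolding A'_def B'_def by auto
  have hall1: "\<forall>S\<subseteq>A'. card S \<le> card (\<Union>(X ` S))"
  proof (intro allI impI, rule ccontr)
    fix S assume S: "S \<subseteq> A'" and lt: "\<not> card S \<le> card (\<Union>(X ` S))"
    define N where "N = \<Union>(X ` S)"
    define Y where "Y = N \<union> {b1, b2}"
    have NB': "N \<subseteq> B'" unfolding N_def X_def by auto
    have finS: "finite S" using S finA' finite_subset by blast
    have finN: "finite N" using NB' finB' finite_subset by blast
    have cY: "card Y = card N + 2" unfolding Y_def using NB' b12 finN unfolding B'_def
      by (subst card_Un_disjoint) auto
    have SV: "S \<subseteq> V" and YV: "Y \<subseteq> V" using S NB' AB bB unfolding A'_def B'_def Y_def by auto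
    have aS: "a1 \<notin> S" "a2 \<notin> S" using S unfolding A'_def by auto
    have SA: "S \<subseteq> A" and YB: "Y \<subseteq> B" using S NB' bB unfolding A'_def B'_def Y_def by auto
    have key: "be g \<in> Y" if g: "g \<in> E - {e,f}" and "ae g \<in> S" for g
    proof (cases "be g \<in> {b1, b2}")
      case True then show ?thesis unfolding Y_def by auto
    next
      case False
      then have "be g \<in> X (ae g)" unfolding X_def B'_def using beB[OF g] jg[OF g] g by auto
      then show ?thesis using that unfolding Y_def N_def by auto
    qed
    define K where "K = {g\<in>E-{e,f}. be g \<in> Y \<and> ae g \<notin> S}"
    have KE: "K \<subseteq> E" unfolding K_def by auto
    have ident: "cnt ends Y g = (if g = f then 2 else 0) + cnt ends S g + (if g \<in> K then 1 else 0)"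
      if g: "g \<in> E" for g
    proof (cases "g = e")
      case True
      then show ?thesis using cnt_e[of Y] cnt_e[of S] aA YB AB(1) ef aS unfolding K_def by auto
    next
      case ne: False
      show ?thesis
      proof (cases "g = f")
        case True
        then show ?thesis using cnt_f[of Y] cnt_f[of S] bB SA AB(1) unfolding K_def Y_def by auto
      next
        case False
        then have g': "g \<in> E - {e,f}" using g ne by auto
        have "ae g \<notin> Y" "be g \<notin> S" using aeA[OF g'] beB[OF g'] SA YB AB(1) by auto
        then show ?thesis using cnt_ab[OF g', of Y] cnt_ab[OF g', of S] key[OF g'] g' False
          unfolding K_def by auto
      qed
    qed
    have "3 * card Y = (\<Sum>g\<in>E. cnt ends Y g)" using cubic_sum[OF c YV] by simp
    also have "\<dots> = (\<Sum>g\<in>E. (if g = f then 2 else 0) + cnt ends S g + (if g \<in> K then 1 else 0))"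
      using ident by (rule sum.cong[OF refl])
    also have "\<dots> = (\<Sum>g\<in>E. (if g = f then 2 else 0)) + (\<Sum>g\<in>E. cnt ends S g) + (\<Sum>g\<in>E. (if g \<in> K then 1 else 0))"
      by (simp add: sum.distrib)
    also have "(\<Sum>g\<in>E. (if g = f then 2 else 0)) = (2::nat)" using finE fE by (simp add: sum.delta)
    also have "(\<Sum>g\<in>E. cnt ends S g) = 3 * card S" using cubic_sum[OF c SV] by simp
    also have "(\<Sum>g\<in>E. (if g \<in> K then 1 else 0)) = card {g\<in>E. g \<in> K}" using card_filter_sum[OF finE, of "\<lambda>g. g \<in> K"] by simp
    also have "{g\<in>E. g \<in> K} = K" using KE by auto
    finally have eq: "3 * card Y = 2 + 3 * card S + card K" .
    have "card K = 1" using eq cY lt unfolding N_def by presburger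
    then obtain g where Kg: "K = {g}" by (meson card_1_singletonE)
    then have gK: "g \<in> E - {e,f}" "be g \<in> Y" "ae g \<notin> S" unfolding K_def by auto
    define W where "W = S \<union> Y"
    have "is_bridge E ends g"
    proof (rule cut_bridge[where W=W])
      show "g \<in> E" using gK by auto
      show "\<forall>h\<in>E - {g}. (fst (ends h) \<in> W) = (snd (ends h) \<in> W)"
      proof
        fix h assume h: "h \<in> E - {g}"
        show "(fst (ends h) \<in> W) = (snd (ends h) \<in> W)"
        proof (cases "h = e \<or> h = f")
          case True
          then show ?thesis using aA bB SA YB AB(1) S unfolding W_def Y_def A'_def
            a1_def a2_def b1_def b2_def by auto
        next
          case False
          then have h': "h \<in> E - {e,f}" "h \<notin> K" using h Kg by auto
          have "ae h \<notin> Y" "be h \<notin> S" using aeA[OF h'(1)] beB[OF h'(1)] SA YB AB(1) by auto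
          then have "(ae h \<in> W) = (be h \<in> W)" using key[OF h'(1)] h' unfolding W_def K_def by auto
          then show ?thesis using jg[OF h'(1)] unfolding joins_def by auto
        qed
      qed
      have "ae g \<notin> Y" using aeA[OF gK(1)] YB AB(1) by auto
      then have "(ae g \<in> W) \<noteq> (be g \<in> W)" using gK unfolding W_def by auto
      then show "(fst (ends g) \<in> W) \<noteq> (snd (ends g) \<in> W)" using jg[OF gK(1)] unfolding joins_def by auto
    qed
    then show False using br gK unfolding bridgeless_def by auto
  qed
  have "\<forall>i\<in>A'. finite (X i)" using finB' unfolding X_def by auto
  from hall[OF finA' this hall1] obtain r where r: "inj_on r A'" "\<forall>a\<in>A'. r a \<in> X a" by blast
  have c2a: "card {a1, a2} = 2" using a12 by simp
  have c2b: "card {b1, b2} = 2" using b12 by simp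
  have "card A' = card A - card {a1, a2}" unfolding A'_def using finA aA
    by (intro card_Diff_subset) auto
  moreover have "card B' = card B - card {b1, b2}" unfolding B'_def using finB bB
    by (intro card_Diff_subset) auto
  ultimately have cA'B': "card A' = card B'" using cardAB c2a c2b by simp
  have rA': "r ` A' = B'"
  proof (rule card_subset_eq[OF finB'])
    show "r ` A' \<subseteq> B'" using r(2) unfolding X_def by auto
    show "card (r ` A') = card B'" using card_image[OF r(1)] cA'B' by simp
  qed
  have "\<exists>M \<subseteq> E - {e,f}. finite M \<and> (\<forall>v. dg M ends v = (if v \<in> A' then 1 else 0) + (if v \<in> r ` A' then 1 else 0))"
  proof (rule matching[OF finA' r(1)])
    show "\<forall>a\<in>A'. \<exists>g\<in>E - {e, f}. joins ends g a (r a)" using r(2) unfolding X_def by auto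
    show "A' \<inter> r ` A' = {}" using rA' AB(1) unfolding A'_def B'_def by auto
  qed
  then obtain M1 where M1: "M1 \<subseteq> E - {e,f}" "finite M1" "\<forall>v. dg M1 ends v = (if v \<in> A' then 1 else 0) + (if v \<in> B' then 1 else 0)"
    using rA' by auto
  define M where "M = M1 \<union> {e, f}"
  have ME: "M \<subseteq> E" using M1 eE fE unfolding M_def by auto
  have dgM: "dg M ends v = 1" if v: "v \<in> V" for v
  proof -
    have "dg M ends v = dg M1 ends v + dg {e,f} ends v" unfolding M_def using M1
      by (intro dg_union) auto
    also have "dg {e,f} ends v = mult ends e v + mult ends f v" unfolding dg_def using ef by simp
    also have "dg M1 ends v = (if v \<in> A' then 1 else 0) + (if v \<in> B' then 1 else 0)" using M1(3) by blast
    finally have eq: "dg M ends v = (if v \<in> A' then 1 else 0) + (if v \<in> B' then 1 else 0) + (mult ends e v + mult ends f v)" .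
    have "v \<in> A \<or> v \<in> B" using v AB by auto
    then show ?thesis
    proof
      assume a: "v \<in> A"
      then have "v \<notin> B'" "v \<noteq> b1" "v \<noteq> b2" using bB AB(1) unfolding B'_def by auto
      then show ?thesis using eq mult_e[of v] mult_f[of v] a a12 unfolding A'_def by auto
    next
      assume b: "v \<in> B"
      then have "v \<notin> A'" "v \<noteq> a1" "v \<noteq> a2" using aA AB(1) unfolding A'_def by auto
      then show ?thesis using eq mult_e[of v] mult_f[of v] b b12 unfolding B'_def by auto
    qed
  qed
  define F where "F = E - M"
  have FE: "F \<subseteq> E - {e,f}" unfolding F_def M_def by auto
  have finF: "finite F" using finE unfolding F_def by auto
  have dgF: "dg F ends v = 2" if v: "v \<in> V" for v
  proof -
    have "dg E ends v = 3" using degV v by blast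
    then show ?thesis unfolding F_def using dg_diff[OF finE ME, of ends v] dgM[OF v] by simp
  qed
  define X2 where "X2 = (\<lambda>a. {b\<in>B. \<exists>g\<in>F. joins ends g a b})"
  have hall2: "\<forall>S\<subseteq>A. card S \<le> card (\<Union>(X2 ` S))"
  proof (intro allI impI)
    fix S assume S: "S \<subseteq> A"
    define N where "N = \<Union>(X2 ` S)"
    have NB: "N \<subseteq> B" unfolding N_def X2_def by auto
    have finS: "finite S" and finN: "finite N" using S NB finA finB finite_subset by auto
    have SV: "S \<subseteq> V" and NV: "N \<subseteq> V" using S NB AB by auto
    have "2 * card S = (\<Sum>v\<in>S. dg F ends v)" using dgF SV by (simp add: subset_iff)
    also have "\<dots> = (\<Sum>g\<in>F. cnt ends S g)" by (rule sum_dg[OF finF finS])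
    also have "\<dots> \<le> (\<Sum>g\<in>F. cnt ends N g)"
    proof (rule sum_mono)
      fix g assume g: "g \<in> F"
      then have g': "g \<in> E - {e,f}" using FE by auto
      have "be g \<notin> S" using beB[OF g'] S AB(1) by auto
      moreover have "ae g \<in> S \<Longrightarrow> be g \<in> N" unfolding N_def X2_def using g jg[OF g'] beB[OF g'] by auto
      ultimately show "cnt ends S g \<le> cnt ends N g" using cnt_ab[OF g', of S] cnt_ab[OF g', of N] by auto
    qed
    also have "\<dots> = (\<Sum>v\<in>N. dg F ends v)" by (rule sym[OF sum_dg[OF finF finN]])
    also have "\<dots> = 2 * card N" using dgF NV by (simp add: subset_iff)
    finally show "card S \<le> card (\<Union>(X2 ` S))" unfolding N_def by simp
  qed
  have "\<forall>i\<in>A. finite (X2 i)" using finB unfolding X2_def by auto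
  from hall[OF finA this hall2] obtain r2 where r2: "inj_on r2 A" "\<forall>a\<in>A. r2 a \<in> X2 a" by blast
  have r2A: "r2 ` A = B"
  proof (rule card_subset_eq[OF finB])
    show "r2 ` A \<subseteq> B" using r2(2) unfolding X2_def by auto
    show "card (r2 ` A) = card B" using card_image[OF r2(1)] cardAB by simp
  qed
  have "\<exists>M \<subseteq> F. finite M \<and> (\<forall>v. dg M ends v = (if v \<in> A then 1 else 0) + (if v \<in> r2 ` A then 1 else 0))"
  proof (rule matching[OF finA r2(1)])
    show "\<forall>a\<in>A. \<exists>g\<in>F. joins ends g a (r2 a)" using r2(2) unfolding X2_def by auto
    show "A \<inter> r2 ` A = {}" using r2A AB(1) by auto
  qed
  then obtain M2 where M2: "M2 \<subseteq> F" "finite M2" "\<forall>v. dg M2 ends v = (if v \<in> A then 1 else 0) + (if v \<in> B then 1 else 0)"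
    using r2A by auto
  have dgM2: "dg M2 ends v = 1" if "v \<in> V" for v using M2(3) that AB by auto
  define col where "col = (\<lambda>g. if g \<in> M then 0 else if g \<in> M2 then 1 else (2::nat))"
  have cls: "{g\<in>E. col g = k} = (if k = 0 then M else if k = 1 then M2 else if k = 2 then F - M2 else {})" for k
    using ME M2(1) unfolding col_def F_def by auto
  have "three_edge_colouring V E ends col"
    unfolding three_edge_colouring_def
  proof (intro conjI ballI allI)
    fix g assume "g \<in> E" show "col g < 3" unfolding col_def by auto
  next
    fix v k assume v: "v \<in> V"
    have "dg {g\<in>E. col g = k} ends v \<le> 1"
      using dgM[OF v] dgM2[OF v] dg_diff[OF finF M2(1), of ends v] dgF[OF v]
      unfolding cls by (auto simp: dg_def)
    then show "card {e \<in> E. fst (ends e) = v \<and> col e = k} + card {e \<in> E. snd (ends e) = v \<and> col e = k} \<le> 1"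
      using card_colour_dg[OF finE, of ends v col k] by linarith
  qed
  then show ?thesis unfolding three_edge_colourable_def by blast
qed


theorem theorem4p4:
  fixes V :: "'v set" and E :: "'e set" and ends :: "'e \<Rightarrow> 'v \<times> 'v"
  assumes "almost_bipartite V E ends"
  shows "three_edge_colourable V E ends"
proof -
  have c: "cubic V E ends" and br: "bridgeless E ends" and nb: "\<not> bipartite E ends"
    using assms unfolding almost_bipartite_def by auto
  have "\<exists>e\<in>E. \<exists>f\<in>E. e \<noteq> f \<and> bipartite (E - {e, f}) ends"
    using assms unfolding almost_bipartite_def by blast
  then obtain e f where eE: "e \<in> E" and fE: "f \<in> E" and ef: "e \<noteq> f"
    and bp: "bipartite (E - {e, f}) ends" by blast
  obtain s :: "'v \<Rightarrow> bool" where bip: "\<forall>g\<in>E-{e,f}. s (fst (ends g)) \<noteq> s (snd (ends g))"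
    using bp unfolding bipartite_def by auto
  have finE: "finite E" and endsV: "\<forall>g\<in>E. fst (ends g) \<in> V \<and> snd (ends g) \<in> V"
    using c unfolding cubic_def multigraph_def by auto
  define A where "A = {v\<in>V. s v}"
  define B where "B = {v\<in>V. \<not> s v}"
  have AV: "A \<subseteq> V" and BV: "B \<subseteq> V" unfolding A_def B_def by auto
  have cAB: "cnt ends A g + cnt ends B g = 2" if "g \<in> E" for g
    using endsV that unfolding cnt_def A_def B_def by auto
  have c1: "cnt ends A g = 1" "cnt ends B g = 1" if "g \<in> E - {e,f}" for g
    using endsV that bip unfolding cnt_def A_def B_def by auto
  have le2: "cnt ends A g \<le> 2" for g unfolding cnt_def by auto
  have eqA: "3 * card A = cnt ends A e + cnt ends A f + (\<Sum>g\<in>E-{e,f}. cnt ends A g)"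
    using cubic_sum[OF c AV] sum2[OF finE eE fE ef, of "cnt ends A"] by linarith
  have eqB: "3 * card B = cnt ends B e + cnt ends B f + (\<Sum>g\<in>E-{e,f}. cnt ends B g)"
    using cubic_sum[OF c BV] sum2[OF finE eE fE ef, of "cnt ends B"] by linarith
  have same: "(\<Sum>g\<in>E-{e,f}. cnt ends A g) = (\<Sum>g\<in>E-{e,f}. cnt ends B g)"
    using c1 by (intro sum.cong) auto
  have not11: "\<not> (cnt ends A e = 1 \<and> cnt ends A f = 1)"
  proof
    assume h: "cnt ends A e = 1 \<and> cnt ends A f = 1"
    have "\<forall>g\<in>E. s (fst (ends g)) \<noteq> s (snd (ends g))"
    proof
      fix g assume g: "g \<in> E"
      show "s (fst (ends g)) \<noteq> s (snd (ends g))"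
      proof (cases "g = e \<or> g = f")
        case True
        then have "cnt ends A g = 1" using h by auto
        then show ?thesis using endsV g unfolding cnt_def A_def by (auto split: if_splits)
      next
        case False then show ?thesis using bip g by auto
      qed
    qed
    then show False using nb unfolding bipartite_def by blast
  qed
  have cases: "(cnt ends A e = 2 \<and> cnt ends A f = 0) \<or> (cnt ends A e = 0 \<and> cnt ends A f = 2)"
  proof -
    define x where "x = cnt ends A e"
    define y where "y = cnt ends A f"
    define x' where "x' = cnt ends B e"
    define y' where "y' = cnt ends B f"
    define m where "m = (\<Sum>g\<in>E-{e,f}. cnt ends A g)"
    define a where "a = card A"
    define b where "b = card B"
    have h: "3 * a = x + y + m" "3 * b = x' + y' + m" "x + x' = 2" "y + y' = 2" "x \<le> 2" "y \<le> 2"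
      "\<not> (x = 1 \<and> y = 1)"
      unfolding x_def y_def x'_def y'_def m_def a_def b_def
      using eqA eqB same cAB[OF eE] cAB[OF fE] le2[of e] le2[of f] not11 by simp_all
    have k: "3 * a + x' + y' = 3 * b + x + y" using h(1,2) by linarith
    have xs: "x = 0 \<or> x = 1 \<or> x = 2" and ys: "y = 0 \<or> y = 1 \<or> y = 2" using h(5,6) by auto
    have "(x = 2 \<and> y = 0) \<or> (x = 0 \<and> y = 2)"
      using xs ys k h(3,4,7) by (elim disjE; presburger)
    then show ?thesis unfolding x_def y_def .
  qed
  then show ?thesis
  proof
    assume h: "cnt ends A e = 2 \<and> cnt ends A f = 0"
    have "s (fst (ends e))" "s (snd (ends e))" "\<not> s (fst (ends f))" "\<not> s (snd (ends f))"
      using h endsV eE fE unfolding cnt_def A_def by (auto split: if_splits)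
    then show ?thesis using core[OF c br eE fE ef bip] by blast
  next
    assume h: "cnt ends A e = 0 \<and> cnt ends A f = 2"
    have "\<not> s (fst (ends e))" "\<not> s (snd (ends e))" "s (fst (ends f))" "s (snd (ends f))"
      using h endsV eE fE unfolding cnt_def A_def by (auto split: if_splits)
    moreover have "\<forall>g\<in>E-{e,f}. (\<not> s (fst (ends g))) \<noteq> (\<not> s (snd (ends g)))" using bip by auto
    ultimately show ?thesis using core[OF c br eE fE ef, of "\<lambda>v. \<not> s v"] by blast
  qed
qed

end
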